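(* Suppose either (1) $X=\mathbb{R}^n$ with the coordinatewise (weak vector dominance) order, or (2) $X=\Delta([a,b])$, the set of Borel probability measures on a real interval $[a,b]$ with the weak* topology, ordered by weak first-order stochastic dominance. Then $X$ has the squeezing property, and there is a sequence of experiments $\{B_i\}_{i\in\mathbb{N}}$ in $X$ such that $(X,\{B_i\})$ has the countable order property.
   Context: First-order stochastic dominance: $x\ge y$ iff $\int f\,dx\ge\int f\,dy$ for all bounded continuous increasing $f$ on $[a,b]$. A sequence of experiments is a sequence $\{B_i\}$ of unordered pairs $B_i\subseteq X$ such that $B=\bigcup_iB_i$ is dense in $X$ and for all $x,y\in B$ there is $k$ with $B_k=\{x,y\}$. Countable order property: for each $x\in X$ and each neighborhood $V$ of $x$ there are $x',x''\in B\cap V$ with $x'\le x\le x''$. Squeezing property: for every sequence $x_n\to x^*$ in $X$ there are an increasing sequence $(x'_n)$ and a decreasing sequence $(x''_n)$ with $x'_n\le x_n\le x''_n$ and $x'_n\to x^*$, $x''_n\to x^*$. *)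

theory Defs
  imports "HOL-Probability.Probability"
begin

definition sequence_of_experiments :: "'a topology \<Rightarrow> (nat \<Rightarrow> 'a set) \<Rightarrow> bool" where
  "sequence_of_experiments T Bs \<longleftrightarrow>
     (\<forall>i. \<exists>x y. x \<in> topspace T \<and> y \<in> topspace T \<and> Bs i = {x, y}) \<and>
     T closure_of (\<Union>i. Bs i) = topspace T \<and>
     (\<forall>x \<in> (\<Union>i. Bs i). \<forall>y \<in> (\<Union>i. Bs i). \<exists>k. Bs k = {x, y})"

definition countable_order_property ::
    "'a topology \<Rightarrow> ('a \<Rightarrow> 'a \<Rightarrow> bool) \<Rightarrow> (nat \<Rightarrow> 'a set) \<Rightarrow> bool" where
  "countable_order_property T le Bs \<longleftrightarrow>
     (\<forall>x \<in> topspace T. \<forall>V. openin T V \<and> x \<in> V \<longrightarrow>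
        (\<exists>x' \<in> (\<Union>i. Bs i) \<inter> V. \<exists>x'' \<in> (\<Union>i. Bs i) \<inter> V. le x' x \<and> le x x''))"

definition squeezing_property :: "'a topology \<Rightarrow> ('a \<Rightarrow> 'a \<Rightarrow> bool) \<Rightarrow> bool" where
  "squeezing_property T le \<longleftrightarrow>
     (\<forall>xs xstar. (\<forall>n. xs n \<in> topspace T) \<and> xstar \<in> topspace T \<and>
                 limitin T xs xstar sequentially \<longrightarrow>
        (\<exists>lo hi. (\<forall>n. lo n \<in> topspace T \<and> hi n \<in> topspace T) \<and>
                 (\<forall>n. le (lo n) (lo (Suc n))) \<and> (\<forall>n. le (hi (Suc n)) (hi n)) \<and>
                 (\<forall>n. le (lo n) (xs n) \<and> le (xs n) (hi n)) \<and>
                 limitin T lo xstar sequentially \<and> limitin T hi xstar sequentially))"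

definition coord_le :: "real^'n \<Rightarrow> real^'n \<Rightarrow> bool" where
  "coord_le x y \<longleftrightarrow> (\<forall>i. x $ i \<le> y $ i)"

definition prob_measures_on :: "real \<Rightarrow> real \<Rightarrow> real measure set" where
  "prob_measures_on a b =
     {M. prob_space M \<and> sets M = sets (restrict_space borel {a..b})}"

definition weak_star_topology :: "real \<Rightarrow> real \<Rightarrow> real measure topology" where
  "weak_star_topology a b =
     topology_generated_by
       {{M \<in> prob_measures_on a b. (\<integral>t. f t \<partial>M) \<in> U} | f U.
          continuous_on {a..b} f \<and> open (U :: real set)}"

definition fosd_le :: "real \<Rightarrow> real \<Rightarrow> real measure \<Rightarrow> real measure \<Rightarrow> bool" where
  "fosd_le a b y x \<longleftrightarrow>
     (\<forall>f :: real \<Rightarrow> real. continuous_on {a..b} f \<and> mono_on {a..b} f \<longrightarrow>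
        (\<integral>t. f t \<partial>y) \<le> (\<integral>t. f t \<partial>x))"

end

theory Submission
  imports Defs
begin

lemma limitin_generated:
  assumes "l \<in> \<Union>S" "\<And>U. U \<in> S \<Longrightarrow> l \<in> U \<Longrightarrow> eventually (\<lambda>n. x n \<in> U) F"
  shows "limitin (topology_generated_by S) x l F"
proof -
  have "generate_topology_on S U \<Longrightarrow> l \<in> U \<Longrightarrow> eventually (\<lambda>n. x n \<in> U) F" for U
  proof (induction rule: generate_topology_on.induct)
    case (Int a b) then show ?case by (auto intro: eventually_conj)
  next
    case (UN K)
    then obtain k where "k \<in> K" "l \<in> k" by auto
    with UN have "eventually (\<lambda>n. x n \<in> k) F" by auto
    then show ?case by (rule eventually_mono) (use \<open>k \<in> K\<close> in auto)
  qed (use assms in auto)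
  then show ?thesis using assms(1) unfolding limitin_def
    by (auto simp: openin_topology_generated_by_iff)
qed

lemma experiments_from_countable:
  assumes "countable B" "B \<noteq> {}" "B \<subseteq> topspace T"
    "\<And>x V. x \<in> topspace T \<Longrightarrow> openin T V \<Longrightarrow> x \<in> V \<Longrightarrow> (\<exists>y\<in>B. y\<in>V)"
  shows "\<exists>Bs. sequence_of_experiments T Bs \<and> (\<Union>i. Bs i) = B"
proof -
  let ?P = "B \<times> B"
  define e where "e = from_nat_into ?P"
  have cP: "countable ?P" "?P \<noteq> {}" using assms by auto
  have re: "range e = ?P" unfolding e_def using range_from_nat_into[OF cP(2) cP(1)] .
  define Bs where "Bs i = {fst (e i), snd (e i)}" for i
  have U: "(\<Union>i. Bs i) = B"
  proof
    show "(\<Union>i. Bs i) \<subseteq> B" using re unfolding Bs_def by (auto, (metis SigmaE fst_conv rangeI snd_conv)+)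
    show "B \<subseteq> (\<Union>i. Bs i)"
    proof
      fix x assume "x \<in> B"
      then have "(x,x) \<in> range e" using re by auto
      then obtain i where "e i = (x,x)" by (metis rangeE)
      then show "x \<in> (\<Union>i. Bs i)" unfolding Bs_def by (auto intro!: exI[of _ i])
    qed
  qed
  have "sequence_of_experiments T Bs"
    unfolding sequence_of_experiments_def
  proof (intro conjI ballI allI)
    fix i
    have "e i \<in> ?P" using re by auto
    then show "\<exists>x y. x \<in> topspace T \<and> y \<in> topspace T \<and> Bs i = {x, y}"
      using assms(3) unfolding Bs_def by (auto simp: mem_Times_iff)
  next
    show "T closure_of (\<Union>i. Bs i) = topspace T"
      unfolding U closure_of_def using assms(4) by auto
  next
    fix x y assume "x \<in> (\<Union>i. Bs i)" "y \<in> (\<Union>i. Bs i)"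
    then have "(x,y) \<in> range e" using U re by auto
    then obtain k where "e k = (x,y)" by (metis rangeE)
    then show "\<exists>k. Bs k = {x, y}" unfolding Bs_def by (auto intro!: exI[of _ k])
  qed
  with U show ?thesis by blast
qed

lemma tail_sup:
  fixes X :: "nat \<Rightarrow> real"
  assumes "X \<longlonglongrightarrow> L"
  shows "(\<lambda>n. SUP m\<in>{n..}. X m) \<longlonglongrightarrow> L" and "(\<lambda>n. INF m\<in>{n..}. X m) \<longlonglongrightarrow> L"
    and "\<And>n. bdd_above (X ` {n..})" and "\<And>n. bdd_below (X ` {n..})"
proof -
  from assms have "Bseq X" using convergent_imp_Bseq convergentI by blast
  then obtain K where K: "\<And>n. norm (X n) \<le> K" by (auto simp: Bseq_def)
  show ba: "bdd_above (X ` {n..})" for n using K by (intro bdd_aboveI[of _ K]) (auto simp: abs_le_iff)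
  show bb: "bdd_below (X ` {n..})" for n
  proof (intro bdd_belowI[of _ "-K"])
    fix y assume "y \<in> X ` {n..}" then obtain m where "y = X m" by auto
    then show "-K \<le> y" using K[of m] by (simp add: abs_le_iff)
  qed
  show "(\<lambda>n. SUP m\<in>{n..}. X m) \<longlonglongrightarrow> L"
  proof (rule LIMSEQ_I)
    fix r :: real assume "0 < r"
    then obtain N where N: "\<And>m. m \<ge> N \<Longrightarrow> norm (X m - L) < r/2"
      using LIMSEQ_D[OF assms, of "r/2"] by auto
    show "\<exists>no. \<forall>n\<ge>no. norm ((SUP m\<in>{n..}. X m) - L) < r"
    proof (intro exI allI impI)
      fix n assume "N \<le> n"
      have "X m \<le> L + r/2" if "m \<in> {n..}" for m
      proof -
        have "norm (X m - L) < r/2" using N that \<open>N \<le> n\<close> by auto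
        then show ?thesis by (smt (verit) real_norm_def)
      qed
      then have "(SUP m\<in>{n..}. X m) \<le> L + r/2"
        by (intro cSUP_least) auto
      moreover have "X n \<le> (SUP m\<in>{n..}. X m)" using ba by (intro cSUP_upper) auto
      moreover have "L - r/2 < X n" using N[OF \<open>N \<le> n\<close>] by (smt (verit) real_norm_def)
      ultimately show "norm ((SUP m\<in>{n..}. X m) - L) < r" using \<open>0<r\<close> by (auto simp: abs_less_iff)
    qed
  qed
  show "(\<lambda>n. INF m\<in>{n..}. X m) \<longlonglongrightarrow> L"
  proof (rule LIMSEQ_I)
    fix r :: real assume "0 < r"
    then obtain N where N: "\<And>m. m \<ge> N \<Longrightarrow> norm (X m - L) < r/2"
      using LIMSEQ_D[OF assms, of "r/2"] by auto
    show "\<exists>no. \<forall>n\<ge>no. norm ((INF m\<in>{n..}. X m) - L) < r"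
    proof (intro exI allI impI)
      fix n assume "N \<le> n"
      have "L - r/2 \<le> X m" if "m \<in> {n..}" for m
      proof -
        have "norm (X m - L) < r/2" using N that \<open>N \<le> n\<close> by auto
        then show ?thesis by (smt (verit) real_norm_def)
      qed
      then have "L - r/2 \<le> (INF m\<in>{n..}. X m)"
        by (intro cINF_greatest) auto
      moreover have "(INF m\<in>{n..}. X m) \<le> X n" using bb by (intro cINF_lower) auto
      moreover have "X n < L + r/2" using N[OF \<open>N \<le> n\<close>] by (smt (verit) real_norm_def)
      ultimately show "norm ((INF m\<in>{n..}. X m) - L) < r" using \<open>0<r\<close> by (auto simp: abs_less_iff)
    qed
  qed
qed

lemma case1_squeeze: "squeezing_property (euclidean :: (real^'n) topology) coord_le"
  unfolding squeezing_property_def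
proof (intro allI impI)
  fix xs :: "nat \<Rightarrow> real^'n" and xstar
  assume "(\<forall>n. xs n \<in> topspace euclidean) \<and> xstar \<in> topspace euclidean \<and> limitin euclidean xs xstar sequentially"
  then have lim: "xs \<longlonglongrightarrow> xstar" by simp
  define d where "d m = norm (xs m - xstar)" for m
  have d0: "d \<longlonglongrightarrow> 0" unfolding d_def using lim
    using tendsto_norm_zero[OF LIM_zero[OF lim]] by simp
  define s where "s n = (SUP m\<in>{n..}. d m)" for n
  have s0: "s \<longlonglongrightarrow> 0" unfolding s_def by (rule tail_sup(1)[OF d0])
  have ba: "bdd_above (d ` {n..})" for n by (rule tail_sup(3)[OF d0])
  have smono: "s (Suc n) \<le> s n" for n
    unfolding s_def by (rule cSUP_subset_mono) (use ba in auto)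
  have ds: "d n \<le> s n" for n unfolding s_def using ba by (intro cSUP_upper) auto
  have comp: "\<bar>xs n $ i - xstar $ i\<bar> \<le> s n" for n i
    using component_le_norm_cart[of "xs n - xstar" i] ds[of n] unfolding d_def by simp
  define lo where "lo n = xstar - (\<chi> i. s n)" for n
  define hi where "hi n = xstar + (\<chi> i. s n)" for n
  have sv: "(\<lambda>n. (\<chi> i. s n) :: real^'n) \<longlonglongrightarrow> 0"
    by (rule vec_tendstoI) (use s0 in simp)
  show "\<exists>lo hi. (\<forall>n. lo n \<in> topspace euclidean \<and> hi n \<in> topspace euclidean) \<and>
                 (\<forall>n. coord_le (lo n) (lo (Suc n))) \<and> (\<forall>n. coord_le (hi (Suc n)) (hi n)) \<and>
                 (\<forall>n. coord_le (lo n) (xs n) \<and> coord_le (xs n) (hi n)) \<and>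
                 limitin euclidean lo xstar sequentially \<and> limitin euclidean hi xstar sequentially"
  proof (intro exI conjI allI)
    show "coord_le (lo n) (lo (Suc n))" for n unfolding lo_def coord_le_def using smono[of n] by simp
    show "coord_le (hi (Suc n)) (hi n)" for n unfolding hi_def coord_le_def using smono[of n] by simp
    show "coord_le (lo n) (xs n)" for n unfolding lo_def coord_le_def
      using comp[of n] by (auto simp: abs_le_iff) (smt (verit) comp)
    show "coord_le (xs n) (hi n)" for n unfolding hi_def coord_le_def
      using comp[of n] by (auto simp: abs_le_iff) (smt (verit) comp)
    show "limitin euclidean lo xstar sequentially"
      unfolding lo_def using tendsto_diff[OF tendsto_const sv, of xstar] by simp
    show "limitin euclidean hi xstar sequentially"
      unfolding hi_def using tendsto_add[OF tendsto_const sv, of xstar] by simp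
  qed auto
qed

lemma case1_cop:
  "\<exists>Bs. sequence_of_experiments (euclidean :: (real^'n) topology) Bs \<and>
                countable_order_property euclidean coord_le Bs"
proof -
  define B where "B = range (\<lambda>g::'n\<Rightarrow>rat. (\<chi> i. of_rat (g i)) :: real^'n)"
  have key: "\<exists>y\<in>B. y \<in> V \<and> coord_le y x" "\<exists>y\<in>B. y \<in> V \<and> coord_le x y"
    if Vx: "open V" "x \<in> V" for x :: "real^'n" and V
  proof -
    obtain e where e: "e > 0" "ball x e \<subseteq> V" using Vx open_contains_ball by blast
    define d where "d = e / (2 * real CARD('n))"
    have d: "d > 0" unfolding d_def using e by simp
    have cd: "real CARD('n) * d < e" unfolding d_def using e by simp
    have close: "y \<in> V" if "\<And>i. \<bar>x $ i - y $ i\<bar> < d" for y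
    proof -
      have "dist x y \<le> (\<Sum>i\<in>UNIV. \<bar>x $ i - y $ i\<bar>)"
        using norm_le_l1_cart[of "x - y"] by (simp add: dist_norm)
      also have "\<dots> \<le> (\<Sum>i\<in>(UNIV::'n set). d)" by (intro sum_mono less_imp_le that)
      also have "\<dots> < e" using cd by simp
      finally show ?thesis using e by auto
    qed
    have "\<forall>i. \<exists>q::rat. x $ i - d < of_rat q \<and> of_rat q < x $ i"
    proof
      fix i show "\<exists>q::rat. x $ i - d < of_rat q \<and> of_rat q < x $ i" using d of_rat_dense[of "x $ i - d" "x $ i"] by simp
    qed
    then have "\<exists>g. \<forall>i. x $ i - d < of_rat (g i) \<and> of_rat (g i) < x $ i" by (rule choice)
    then obtain g where g: "\<And>i. x $ i - d < of_rat (g i) \<and> of_rat (g i) < x $ i" by blast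
    have "\<forall>i. \<exists>q::rat. x $ i < of_rat q \<and> of_rat q < x $ i + d"
    proof
      fix i show "\<exists>q::rat. x $ i < of_rat q \<and> of_rat q < x $ i + d" using d of_rat_dense[of "x $ i" "x $ i + d"] by simp
    qed
    then have "\<exists>h. \<forall>i. x $ i < of_rat (h i) \<and> of_rat (h i) < x $ i + d" by (rule choice)
    then obtain h where h: "\<And>i. x $ i < of_rat (h i) \<and> of_rat (h i) < x $ i + d" by blast
    let ?y = "(\<chi> i. of_rat (g i)) :: real^'n"
    have "\<bar>x $ i - ?y $ i\<bar> < d" for i using g[of i] by (simp add: abs_less_iff)
    then have "?y \<in> V" by (rule close)
    moreover have "?y \<in> B" unfolding B_def by blast
    moreover have "coord_le ?y x" unfolding coord_le_def using g by (simp add: less_imp_le)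
    ultimately show "\<exists>y\<in>B. y \<in> V \<and> coord_le y x" by blast
    let ?z = "(\<chi> i. of_rat (h i)) :: real^'n"
    have "\<bar>x $ i - ?z $ i\<bar> < d" for i using h[of i] by (simp add: abs_less_iff)
    then have "?z \<in> V" by (rule close)
    moreover have "?z \<in> B" unfolding B_def by blast
    moreover have "coord_le x ?z" unfolding coord_le_def using h by (simp add: less_imp_le)
    ultimately show "\<exists>y\<in>B. y \<in> V \<and> coord_le x y" by blast
  qed
  have "countable B" unfolding B_def by simp
  moreover have "B \<noteq> {}" unfolding B_def by simp
  moreover have "B \<subseteq> topspace euclidean" by simp
  moreover have "\<exists>y\<in>B. y\<in>V" if "x \<in> topspace euclidean" "openin euclidean V" "x \<in> V" for x V
    using key(1)[of V x] that by auto
  ultimately obtain Bs where Bs: "sequence_of_experiments (euclidean :: (real^'n) topology) Bs" "(\<Union>i. Bs i) = B"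
    using experiments_from_countable[of B euclidean] by blast
  moreover have "countable_order_property euclidean coord_le Bs"
    unfolding countable_order_property_def Bs(2) using key by (metis IntI open_openin)
  ultimately show ?thesis by blast
qed

definition clampr :: "real \<Rightarrow> real \<Rightarrow> real \<Rightarrow> real" where
  "clampr a b x = max a (min b x)"

lemma clampr_in: "a \<le> b \<Longrightarrow> clampr a b x \<in> {a..b}" unfolding clampr_def by auto
lemma clampr_id: "x \<in> {a..b} \<Longrightarrow> clampr a b x = x" unfolding clampr_def by auto
lemma clampr_mono: "x \<le> y \<Longrightarrow> clampr a b x \<le> clampr a b y" unfolding clampr_def by auto
lemma clampr_cont: "continuous_on UNIV (clampr a b)"
  unfolding clampr_def[abs_def] by (intro continuous_intros)
lemma clampr_meas[measurable]: "clampr a b \<in> borel_measurable borel"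
  by (rule borel_measurable_continuous_onI[OF clampr_cont])
lemma clampr_tendsto: "X \<longlonglongrightarrow> L \<Longrightarrow> (\<lambda>n. clampr a b (X n)) \<longlonglongrightarrow> clampr a b L"
  unfolding clampr_def by (intro tendsto_intros)

lemma cont_clampr_comp:
  assumes "continuous_on {a..b} f" "a \<le> b"
  shows "continuous_on UNIV (\<lambda>x. f (clampr a b x))"
proof -
  have "clampr a b ` UNIV \<subseteq> {a..b}" using clampr_in[OF assms(2)] by auto
  from continuous_on_compose2[OF assms(1) clampr_cont this] show ?thesis .
qed

lemma cont_bound:
  assumes "continuous_on {a..b} (f::real\<Rightarrow>real)"
  obtains K where "\<And>x. x \<in> {a..b} \<Longrightarrow> \<bar>f x\<bar> \<le> K"
proof -
  have "bounded (f ` {a..b})" by (rule compact_imp_bounded[OF compact_continuous_image[OF assms compact_Icc]])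
  then obtain K where "\<forall>y\<in>f ` {a..b}. norm y \<le> K" by (auto simp: bounded_iff)
  then have "\<And>x. x \<in> {a..b} \<Longrightarrow> \<bar>f x\<bar> \<le> K" by auto
  then show ?thesis by (rule that)
qed

lemma topspace_ws: "topspace (weak_star_topology a b) = prob_measures_on a b"
proof -
  have "prob_measures_on a b \<in> {{M \<in> prob_measures_on a b. (\<integral>t. f t \<partial>M) \<in> U} | f U.
          continuous_on {a..b} f \<and> open (U :: real set)}"
    by (rule CollectI, rule exI[of _ "\<lambda>_. 0"], rule exI[of _ UNIV]) auto
  then show ?thesis unfolding weak_star_topology_def by auto
qed

lemma ws_limitin_I:
  fixes ms :: "nat \<Rightarrow> real measure"
  assumes "l \<in> prob_measures_on a b" "\<And>n. ms n \<in> prob_measures_on a b"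
    "\<And>f::real\<Rightarrow>real. continuous_on {a..b} f \<Longrightarrow> (\<lambda>n. \<integral>t. f t \<partial>ms n) \<longlonglongrightarrow> (\<integral>t. f t \<partial>l)"
  shows "limitin (weak_star_topology a b) ms l sequentially"
  unfolding weak_star_topology_def
proof (rule limitin_generated)
  show "l \<in> \<Union>{{M \<in> prob_measures_on a b. (\<integral>t. f t \<partial>M) \<in> U} | f U. continuous_on {a..b} f \<and> open (U :: real set)}"
    using assms(1) topspace_ws[of a b] unfolding weak_star_topology_def by simp
  fix U assume U0: "U \<in> {{M \<in> prob_measures_on a b. (\<integral>t. f t \<partial>M) \<in> U} | f U. continuous_on {a..b} f \<and> open (U :: real set)}" "l \<in> U"
  from U0(1) obtain f :: "real \<Rightarrow> real" and W where U: "U = {M \<in> prob_measures_on a b. (\<integral>t. f t \<partial>M) \<in> W}" "continuous_on {a..b} f" "open W"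
    unfolding mem_Collect_eq by (elim exE conjE) simp
  have "(\<integral>t. f t \<partial>l) \<in> W" using U0(2) U(1) by simp
  from topological_tendstoD[OF assms(3)[OF U(2)] U(3) this]
  have "eventually (\<lambda>n. (\<integral>t. f t \<partial>ms n) \<in> W) sequentially" .
  then show "eventually (\<lambda>n. ms n \<in> U) sequentially"
    by (rule eventually_mono) (simp add: U(1) assms(2))
qed

lemma ws_limitin_D:
  fixes f :: "real \<Rightarrow> real"
  assumes "limitin (weak_star_topology a b) ms l sequentially" "continuous_on {a..b} f"
  shows "(\<lambda>n. \<integral>t. f t \<partial>ms n) \<longlonglongrightarrow> (\<integral>t. f t \<partial>l)"
proof (rule topological_tendstoI)
  fix W assume W: "open W" "(\<integral>t. f t \<partial>l) \<in> W"
  let ?U = "{M \<in> prob_measures_on a b. (\<integral>t. f t \<partial>M) \<in> W}"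
  have lim: "\<And>U. openin (weak_star_topology a b) U \<Longrightarrow> l \<in> U \<Longrightarrow> eventually (\<lambda>n. ms n \<in> U) sequentially"
    using assms(1) unfolding limitin_def by blast
  have o: "openin (weak_star_topology a b) ?U"
    unfolding weak_star_topology_def
    by (rule topology_generated_by_Basis, rule CollectI, rule exI[of _ f], rule exI[of _ W]) (simp add: assms(2) W(1))
  have "l \<in> ?U" using assms(1) W unfolding limitin_def topspace_ws by simp
  from lim[OF o this] have "eventually (\<lambda>n. ms n \<in> ?U) sequentially" .
  then show "eventually (\<lambda>n. (\<integral>t. f t \<partial>ms n) \<in> W) sequentially" by (rule eventually_mono) simp
qed

definition qrep :: "real \<Rightarrow> real \<Rightarrow> real measure \<Rightarrow> real measure \<Rightarrow> (real \<Rightarrow> real) \<Rightarrow> bool" where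
  "qrep a b \<Omega> \<mu> g \<longleftrightarrow> g \<in> borel_measurable \<Omega> \<and> (\<forall>\<omega>\<in>space \<Omega>. g \<omega> \<in> {a..b}) \<and>
     (\<forall>f::real\<Rightarrow>real. continuous_on {a..b} f \<longrightarrow> (\<integral>t. f t \<partial>\<mu>) = (\<integral>\<omega>. f (g \<omega>) \<partial>\<Omega>))"

lemma comp_meas:
  assumes "g \<in> borel_measurable \<Omega>" "\<forall>\<omega>\<in>space \<Omega>. g \<omega> \<in> {a..b}" "continuous_on {a..b} f"
  shows "(\<lambda>\<omega>. f (g \<omega>)) \<in> borel_measurable \<Omega>"
proof -
  have "g \<in> measurable \<Omega> (restrict_space borel {a..b})"
    using assms(1,2) by (intro measurable_restrict_space2) auto
  from measurable_comp[OF this borel_measurable_continuous_on_restrict[OF assms(3)]]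
  show ?thesis by (simp add: comp_def)
qed

lemma comp_integrable:
  fixes f :: "real \<Rightarrow> real"
  assumes "prob_space \<Omega>" "g \<in> borel_measurable \<Omega>" "\<forall>\<omega>\<in>space \<Omega>. g \<omega> \<in> {a..b}" "continuous_on {a..b} f"
  shows "integrable \<Omega> (\<lambda>\<omega>. f (g \<omega>))"
proof -
  interpret prob_space \<Omega> by fact
  obtain K where K: "\<And>x. x \<in> {a..b} \<Longrightarrow> \<bar>f x\<bar> \<le> K" using cont_bound[OF assms(4)] by blast
  show ?thesis
    by (rule integrable_const_bound[where B=K]) (use K assms(3) comp_meas[OF assms(2,3,4)] in auto)
qed

lemma meas_rep:
  assumes "prob_space \<Omega>" "g \<in> borel_measurable \<Omega>" "\<forall>\<omega>\<in>space \<Omega>. g \<omega> \<in> {a..b}"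
  shows "distr \<Omega> (restrict_space borel {a..b}) g \<in> prob_measures_on a b"
    and "qrep a b \<Omega> (distr \<Omega> (restrict_space borel {a..b}) g) g"
proof -
  have gm: "g \<in> measurable \<Omega> (restrict_space borel {a..b})"
    using assms(2,3) by (intro measurable_restrict_space2) auto
  show "distr \<Omega> (restrict_space borel {a..b}) g \<in> prob_measures_on a b"
    unfolding prob_measures_on_def using prob_space.prob_space_distr[OF assms(1) gm] by simp
  show "qrep a b \<Omega> (distr \<Omega> (restrict_space borel {a..b}) g) g"
    unfolding qrep_def using assms
    by (auto intro!: integral_distr gm borel_measurable_continuous_on_restrict)
qed

lemma qrepD:
  assumes "qrep a b \<Omega> \<mu> g"
  shows "g \<in> borel_measurable \<Omega>" "\<And>\<omega>. \<omega> \<in> space \<Omega> \<Longrightarrow> g \<omega> \<in> {a..b}"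
    "\<And>f::real\<Rightarrow>real. continuous_on {a..b} f \<Longrightarrow> (\<integral>t. f t \<partial>\<mu>) = (\<integral>\<omega>. f (g \<omega>) \<partial>\<Omega>)"
  using assms unfolding qrep_def by auto

lemma rep_cmp:
  assumes "prob_space \<Omega>" "qrep a b \<Omega> \<mu> g" "qrep a b \<Omega> \<nu> h" "\<And>\<omega>. \<omega> \<in> space \<Omega> \<Longrightarrow> g \<omega> \<le> h \<omega>"
  shows "fosd_le a b \<mu> \<nu>"
  unfolding fosd_le_def
proof (intro allI impI)
  fix f :: "real \<Rightarrow> real" assume f: "continuous_on {a..b} f \<and> mono_on {a..b} f"
  note g = qrepD[OF assms(2)] and h = qrepD[OF assms(3)]
  have "(\<integral>\<omega>. f (g \<omega>) \<partial>\<Omega>) \<le> (\<integral>\<omega>. f (h \<omega>) \<partial>\<Omega>)"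
  proof (rule integral_mono)
    show "integrable \<Omega> (\<lambda>\<omega>. f (g \<omega>))"
      by (rule comp_integrable[OF assms(1) g(1)]) (use g(2) f in auto)
    show "integrable \<Omega> (\<lambda>\<omega>. f (h \<omega>))"
      by (rule comp_integrable[OF assms(1) h(1)]) (use h(2) f in auto)
    fix \<omega> assume w: "\<omega> \<in> space \<Omega>"
    show "f (g \<omega>) \<le> f (h \<omega>)"
      using f g(2)[OF w] h(2)[OF w] assms(4)[OF w] by (intro mono_onD[of "{a..b}" f]) auto
  qed
  then show "(\<integral>t. f t \<partial>\<mu>) \<le> (\<integral>t. f t \<partial>\<nu>)" using g(3) h(3) f by simp
qed

lemma rep_conv:
  assumes "prob_space \<Omega>" "\<And>n. qrep a b \<Omega> (ms n) (gs n)" "\<And>n. ms n \<in> prob_measures_on a b"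
    "qrep a b \<Omega> \<mu> g" "\<mu> \<in> prob_measures_on a b" "AE \<omega> in \<Omega>. (\<lambda>n. gs n \<omega>) \<longlonglongrightarrow> g \<omega>"
  shows "limitin (weak_star_topology a b) ms \<mu> sequentially"
proof (rule ws_limitin_I[OF assms(5,3)])
  fix f :: "real \<Rightarrow> real" assume f: "continuous_on {a..b} f"
  obtain K where K: "\<And>x. x \<in> {a..b} \<Longrightarrow> \<bar>f x\<bar> \<le> K" using cont_bound[OF f] by blast
  interpret prob_space \<Omega> by fact
  note gs = qrepD[OF assms(2)] and g = qrepD[OF assms(4)]
  have "(\<lambda>n. \<integral>\<omega>. f (gs n \<omega>) \<partial>\<Omega>) \<longlonglongrightarrow> (\<integral>\<omega>. f (g \<omega>) \<partial>\<Omega>)"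
  proof (rule integral_dominated_convergence[where w="\<lambda>_. K"])
    show "(\<lambda>\<omega>. f (g \<omega>)) \<in> borel_measurable \<Omega>"
      by (rule comp_meas[OF g(1) _ f]) (use g(2) in auto)
    show "(\<lambda>\<omega>. f (gs n \<omega>)) \<in> borel_measurable \<Omega>" for n
      by (rule comp_meas[OF gs(1) _ f]) (use gs(2) in auto)
    show "integrable \<Omega> (\<lambda>_. K)" by simp
    show "AE \<omega> in \<Omega>. norm (f (gs n \<omega>)) \<le> K" for n
      by (rule AE_I2) (use K gs(2) in auto)
    show "AE \<omega> in \<Omega>. (\<lambda>n. f (gs n \<omega>)) \<longlonglongrightarrow> f (g \<omega>)"
      using assms(6) AE_space
    proof eventually_elim
      case (elim \<omega>)
      show ?case
        by (rule continuous_on_tendsto_compose[OF f elim(1)]) (use elim(2) g(2) gs(2) in auto)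
    qed
  qed
  then show "(\<lambda>n. \<integral>t. f t \<partial>ms n) \<longlonglongrightarrow> (\<integral>t. f t \<partial>\<mu>)"
    using gs(3)[OF f] g(3)[OF f] by simp
qed

lemma space_P: "\<mu> \<in> prob_measures_on a b \<Longrightarrow> space \<mu> = {a..b}"
proof -
  assume "\<mu> \<in> prob_measures_on a b"
  then have "sets \<mu> = sets (restrict_space borel {a..b})" by (simp add: prob_measures_on_def)
  from sets_eq_imp_space_eq[OF this] show ?thesis by (simp add: space_restrict_space)
qed

lemma id_meas_P: "\<mu> \<in> prob_measures_on a b \<Longrightarrow> (\<lambda>x. x) \<in> borel_measurable \<mu>"
proof -
  assume "\<mu> \<in> prob_measures_on a b"
  then have s: "sets \<mu> = sets (restrict_space borel {a..b})" unfolding prob_measures_on_def by auto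
  have "(\<lambda>x::real. x) \<in> borel_measurable (restrict_space borel {a..b})"
    by (rule borel_measurable_continuous_on_restrict[OF continuous_on_id])
  then show ?thesis by (subst measurable_cong_sets[OF s refl])
qed

lemma real_dist_P: "\<mu> \<in> prob_measures_on a b \<Longrightarrow> real_distribution (distr \<mu> borel (\<lambda>x. x))"
  unfolding real_distribution_def real_distribution_axioms_def
  using prob_space.prob_space_distr[OF _ id_meas_P] by (auto simp: prob_measures_on_def)

lemma int_P_distr:
  fixes h :: "real \<Rightarrow> real"
  assumes "\<mu> \<in> prob_measures_on a b" "h \<in> borel_measurable borel"
  shows "(\<integral>x. h x \<partial>distr \<mu> borel (\<lambda>x. x)) = (\<integral>x. h x \<partial>\<mu>)"
  using integral_distr[OF id_meas_P[OF assms(1)] assms(2)] by simp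

lemma rep_skor:
  assumes "\<mu> \<in> prob_measures_on a b" "a \<le> b" "Y \<in> borel_measurable \<Omega>"
    "distr \<Omega> borel Y = distr \<mu> borel (\<lambda>x. x)"
  shows "qrep a b \<Omega> \<mu> (\<lambda>\<omega>. clampr a b (Y \<omega>))"
  unfolding qrep_def
proof (intro conjI ballI allI impI)
  show "(\<lambda>\<omega>. clampr a b (Y \<omega>)) \<in> borel_measurable \<Omega>"
    using measurable_comp[OF assms(3) clampr_meas] by (simp add: comp_def)
  show "clampr a b (Y \<omega>) \<in> {a..b}" for \<omega> using clampr_in[OF assms(2)] .
  fix f :: "real \<Rightarrow> real" assume f: "continuous_on {a..b} f"
  have fm: "(\<lambda>x. f (clampr a b x)) \<in> borel_measurable borel"
    by (rule borel_measurable_continuous_onI[OF cont_clampr_comp[OF f assms(2)]])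
  have "(\<integral>t. f t \<partial>\<mu>) = (\<integral>t. f (clampr a b t) \<partial>\<mu>)"
    by (rule Bochner_Integration.integral_cong) (auto simp: space_P[OF assms(1)] clampr_id)
  also have "\<dots> = (\<integral>t. f (clampr a b t) \<partial>distr \<mu> borel (\<lambda>x. x))"
    using int_P_distr[OF assms(1) fm] by simp
  also have "\<dots> = (\<integral>\<omega>. f (clampr a b (Y \<omega>)) \<partial>\<Omega>)"
    unfolding assms(4)[symmetric] by (rule integral_distr[OF assms(3) fm])
  finally show "(\<integral>t. f t \<partial>\<mu>) = (\<integral>\<omega>. f (clampr a b (Y \<omega>)) \<partial>\<Omega>)" .
qed

lemma clampr_lip: "\<bar>clampr a b x - clampr a b y\<bar> \<le> \<bar>x - y\<bar>"
  unfolding clampr_def by auto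

lemma ceil_idx:
  assumes "0 < \<omega>" "\<omega> < 1" "0 < N"
  shows "1 \<le> nat \<lceil>\<omega> * real N\<rceil>" "nat \<lceil>\<omega> * real N\<rceil> \<le> N"
    "\<omega> \<le> real (nat \<lceil>\<omega> * real N\<rceil>) / real N" "real (nat \<lceil>\<omega> * real N\<rceil>) / real N < \<omega> + 1 / real N"
proof -
  have p: "0 < \<omega> * real N" using assms by simp
  have q: "\<omega> * real N < real N" using assms by simp
  have c1: "\<omega> * real N \<le> of_int \<lceil>\<omega> * real N\<rceil>" by (rule le_of_int_ceiling)
  have c2: "of_int \<lceil>\<omega> * real N\<rceil> < \<omega> * real N + 1" using ceiling_correct[of "\<omega> * real N"] by linarith
  have pos: "0 < \<lceil>\<omega> * real N\<rceil>" using p by simp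
  then have e: "real (nat \<lceil>\<omega> * real N\<rceil>) = of_int \<lceil>\<omega> * real N\<rceil>" by simp
  show "1 \<le> nat \<lceil>\<omega> * real N\<rceil>" using pos by (simp add: Suc_le_eq)
  have "\<lceil>\<omega> * real N\<rceil> \<le> int N" using q by (simp add: ceiling_le_iff)
  then show "nat \<lceil>\<omega> * real N\<rceil> \<le> N" by (simp only: nat_le_iff)
  show "\<omega> \<le> real (nat \<lceil>\<omega> * real N\<rceil>) / real N" using c1 assms(3) unfolding e by (simp add: field_simps)
  show "real (nat \<lceil>\<omega> * real N\<rceil>) / real N < \<omega> + 1 / real N" using c2 assms(3) unfolding e by (simp add: field_simps)
qed

lemma floor_idx:
  assumes "0 < \<omega>" "\<omega> < 1" "0 < N"
  shows "nat \<lfloor>\<omega> * real N\<rfloor> < N"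
    "real (nat \<lfloor>\<omega> * real N\<rfloor>) / real N \<le> \<omega>" "\<omega> - 1 / real N < real (nat \<lfloor>\<omega> * real N\<rfloor>) / real N"
    "1 / real N < \<omega> \<Longrightarrow> 1 \<le> nat \<lfloor>\<omega> * real N\<rfloor>"
proof -
  have p: "0 < \<omega> * real N" using assms by simp
  have q: "\<omega> * real N < real N" using assms by simp
  have c1: "of_int \<lfloor>\<omega> * real N\<rfloor> \<le> \<omega> * real N" by (rule of_int_floor_le)
  have c2: "\<omega> * real N < of_int \<lfloor>\<omega> * real N\<rfloor> + 1" by (rule real_of_int_floor_add_one_gt)
  have pos: "0 \<le> \<lfloor>\<omega> * real N\<rfloor>" using p by simp
  then have e: "real (nat \<lfloor>\<omega> * real N\<rfloor>) = of_int \<lfloor>\<omega> * real N\<rfloor>" by simp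
  have "\<lfloor>\<omega> * real N\<rfloor> < int N" using q by (simp add: floor_less_iff)
  then show "nat \<lfloor>\<omega> * real N\<rfloor> < N" using pos by (simp add: nat_less_iff)
  show "real (nat \<lfloor>\<omega> * real N\<rfloor>) / real N \<le> \<omega>" using c1 assms(3) unfolding e by (simp add: field_simps)
  have "\<omega> * real N - 1 < of_int \<lfloor>\<omega> * real N\<rfloor>" using c2 by linarith
  then have "(\<omega> * real N - 1) / real N < of_int \<lfloor>\<omega> * real N\<rfloor> / real N"
    using assms(3) by (simp add: divide_strict_right_mono)
  moreover have "(\<omega> * real N - 1) / real N = \<omega> - 1 / real N" using assms(3) by (simp add: field_simps)
  ultimately show "\<omega> - 1 / real N < real (nat \<lfloor>\<omega> * real N\<rfloor>) / real N" unfolding e by simp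
  assume "1 / real N < \<omega>"
  then have "1 \<le> \<omega> * real N" using assms(3) by (simp add: field_simps)
  then have "1 \<le> \<lfloor>\<omega> * real N\<rfloor>" by (simp add: le_floor_iff)
  from nat_mono[OF this] show "1 \<le> nat \<lfloor>\<omega> * real N\<rfloor>" by simp
qed

abbreviation UU :: "real measure" where "UU \<equiv> restrict_space lborel {0<..<1::real}"

lemma prob_UU: "prob_space UU"
  by (auto simp add: emeasure_restrict_space space_restrict_space intro!: prob_spaceI)

lemma space_UU: "space UU = {0<..<1}"
  by (simp add: space_restrict_space)

lemma quantile_rep:
  assumes "\<mu> \<in> prob_measures_on a b" "a \<le> b"
  obtains Q where "qrep a b UU \<mu> Q" "mono_on {0<..<1} Q"
proof -
  let ?M = "distr \<mu> borel (\<lambda>x. x)"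
  interpret cdf_distribution ?M
    unfolding cdf_distribution_def by (rule real_dist_P[OF assms(1)])
  have Im: "I \<in> borel_measurable UU"
    using measurable_CI measurable_cong_sets[OF sets_restrict_space_cong[OF sets_lborel] refl] by simp
  have "qrep a b UU \<mu> (\<lambda>\<omega>. clampr a b (I \<omega>))"
    by (rule rep_skor[OF assms(1,2) Im distr_I_eq_M])
  moreover have "mono_on {0<..<1} (\<lambda>\<omega>. clampr a b (I \<omega>))"
    using mono_I unfolding mono_on_def by (auto intro: clampr_mono)
  ultimately show ?thesis using that by blast
qed

definition stepf :: "real \<Rightarrow> real \<Rightarrow> bool \<Rightarrow> nat \<Rightarrow> rat list \<Rightarrow> real \<Rightarrow> real" where
  "stepf a b up N rs \<omega> = clampr a b (of_rat (rs ! nat (if up then \<lceil>\<omega> * real N\<rceil> else \<lfloor>\<omega> * real N\<rfloor>)))"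

lemma stepf_meas: "stepf a b up N rs \<in> borel_measurable UU"
proof -
  have "(\<lambda>\<omega>::real. if up then \<lceil>\<omega> * real N\<rceil> else \<lfloor>\<omega> * real N\<rfloor>) \<in> measurable borel (count_space UNIV)"
    by measurable
  moreover have "(\<lambda>k::int. clampr a b (of_rat (rs ! nat k))) \<in> measurable (count_space UNIV) borel"
    by simp
  ultimately have "stepf a b up N rs \<in> borel_measurable borel"
    using measurable_comp unfolding stepf_def comp_def by fastforce
  then have "stepf a b up N rs \<in> borel_measurable lborel"
    using measurable_cong_sets[OF sets_lborel refl] by simp
  then show ?thesis by (rule measurable_restrict_space1)
qed

lemma case2_squeeze:
  assumes ab: "a < b"
  shows "squeezing_property (weak_star_topology a b) (fosd_le a b)"
  unfolding squeezing_property_def topspace_ws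
proof (intro allI impI)
  fix xs xstar
  assume H: "(\<forall>n. xs n \<in> prob_measures_on a b) \<and> xstar \<in> prob_measures_on a b \<and>
     limitin (weak_star_topology a b) xs xstar sequentially"
  then have xsP: "\<And>n. xs n \<in> prob_measures_on a b" and xP: "xstar \<in> prob_measures_on a b"
    and lim: "limitin (weak_star_topology a b) xs xstar sequentially" by auto
  define Mn where "Mn n = distr (xs n) borel (\<lambda>x. x)" for n
  define M where "M = distr xstar borel (\<lambda>x. x)"
  have rdn: "\<And>n. real_distribution (Mn n)" unfolding Mn_def by (rule real_dist_P[OF xsP])
  have rd: "real_distribution M" unfolding M_def by (rule real_dist_P[OF xP])
  have wc: "weak_conv_m Mn M"
  proof (rule integral_bdd_continuous_conv_imp_weak_conv[OF rdn rd])
    fix f :: "real \<Rightarrow> real" assume f: "\<And>x. isCont f x" "\<And>x. \<bar>f x\<bar> \<le> 1"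
    have fc: "continuous_on UNIV f" using f(1) by (intro continuous_at_imp_continuous_on) auto
    then have fc': "continuous_on {a..b} f" by (rule continuous_on_subset) auto
    have fm: "f \<in> borel_measurable borel" by (rule borel_measurable_continuous_onI[OF fc])
    show "(\<lambda>n. integral\<^sup>L (Mn n) f) \<longlonglongrightarrow> integral\<^sup>L M f"
      unfolding Mn_def M_def int_P_distr[OF xsP fm] int_P_distr[OF xP fm]
      by (rule ws_limitin_D[OF lim fc'])
  qed
  from Skorohod[OF rdn rd wc] obtain \<Omega> :: "real measure" and Ys :: "nat \<Rightarrow> real \<Rightarrow> real" and Y where
    sk: "prob_space \<Omega>" "\<forall>n. Ys n \<in> measurable \<Omega> borel" "\<forall>n. distr \<Omega> borel (Ys n) = Mn n"
      "Y \<in> measurable \<Omega> lborel" "distr \<Omega> borel Y = M" "\<forall>x \<in> space \<Omega>. (\<lambda>n. Ys n x) \<longlonglongrightarrow> Y x"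
    by blast
  have Ym: "Y \<in> borel_measurable \<Omega>" using sk(4) measurable_cong_sets[OF refl sets_lborel] by simp
  define Z where "Z n \<omega> = clampr a b (Ys n \<omega>)" for n \<omega>
  define Zs where "Zs \<omega> = clampr a b (Y \<omega>)" for \<omega>
  have ab': "a \<le> b" using ab by simp
  have repn: "qrep a b \<Omega> (xs n) (Z n)" for n
    unfolding Z_def by (rule rep_skor[OF xsP ab']) (use sk(2,3) Mn_def in auto)
  have repx: "qrep a b \<Omega> xstar Zs"
    unfolding Zs_def by (rule rep_skor[OF xP ab' Ym]) (use sk(5) M_def in auto)
  have Zm: "Z n \<in> borel_measurable \<Omega>" for n using qrepD(1)[OF repn] .
  have Zin: "Z n \<omega> \<in> {a..b}" for n \<omega> unfolding Z_def by (rule clampr_in[OF ab'])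
  have Zconv: "(\<lambda>n. Z n \<omega>) \<longlonglongrightarrow> Zs \<omega>" if "\<omega> \<in> space \<Omega>" for \<omega>
    unfolding Z_def Zs_def by (rule clampr_tendsto) (use sk(6) that in auto)
  have bb: "bdd_below ((\<lambda>m. Z m \<omega>) ` I)" for \<omega> I using Zin by (intro bdd_belowI[of _ a]) auto
  have ba: "bdd_above ((\<lambda>m. Z m \<omega>) ` I)" for \<omega> I using Zin by (intro bdd_aboveI[of _ b]) auto
  define lo where "lo n \<omega> = (INF m\<in>{n..}. Z m \<omega>)" for n \<omega>
  define hi where "hi n \<omega> = (SUP m\<in>{n..}. Z m \<omega>)" for n \<omega>
  have lo_le: "lo n \<omega> \<le> Z n \<omega>" for n \<omega> unfolding lo_def by (rule cINF_lower[OF bb]) auto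
  have hi_ge: "Z n \<omega> \<le> hi n \<omega>" for n \<omega> unfolding hi_def by (rule cSUP_upper[OF _ ba]) auto
  have lo_ge: "a \<le> lo n \<omega>" for n \<omega> unfolding lo_def by (rule cINF_greatest) (use Zin in auto)
  have hi_le: "hi n \<omega> \<le> b" for n \<omega> unfolding hi_def by (rule cSUP_least) (use Zin in auto)
  have lo_in: "lo n \<omega> \<in> {a..b}" for n \<omega> using lo_ge[of n \<omega>] lo_le[of n \<omega>] Zin[of n \<omega>] by auto
  have hi_in: "hi n \<omega> \<in> {a..b}" for n \<omega> using hi_le[of n \<omega>] hi_ge[of n \<omega>] Zin[of n \<omega>] by auto
  have lo_m: "lo n \<in> borel_measurable \<Omega>" for n
    unfolding lo_def by (rule borel_measurable_cINF) (use Zm bb in auto)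
  have hi_m: "hi n \<in> borel_measurable \<Omega>" for n
    unfolding hi_def by (rule borel_measurable_cSUP) (use Zm ba in auto)
  have lo_mono: "lo n \<omega> \<le> lo (Suc n) \<omega>" for n \<omega>
    unfolding lo_def by (rule cINF_superset_mono) (use bb in auto)
  have hi_mono: "hi (Suc n) \<omega> \<le> hi n \<omega>" for n \<omega>
    unfolding hi_def by (rule cSUP_subset_mono) (use ba in auto)
  define LO where "LO n = distr \<Omega> (restrict_space borel {a..b}) (lo n)" for n
  define HI where "HI n = distr \<Omega> (restrict_space borel {a..b}) (hi n)" for n
  have LO: "LO n \<in> prob_measures_on a b" "qrep a b \<Omega> (LO n) (lo n)" for n
    unfolding LO_def using meas_rep[OF sk(1) lo_m] lo_in by auto
  have HI: "HI n \<in> prob_measures_on a b" "qrep a b \<Omega> (HI n) (hi n)" for n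
    unfolding HI_def using meas_rep[OF sk(1) hi_m] hi_in by auto
  show "\<exists>lo hi. (\<forall>n. lo n \<in> prob_measures_on a b \<and> hi n \<in> prob_measures_on a b) \<and>
                 (\<forall>n. fosd_le a b (lo n) (lo (Suc n))) \<and> (\<forall>n. fosd_le a b (hi (Suc n)) (hi n)) \<and>
                 (\<forall>n. fosd_le a b (lo n) (xs n) \<and> fosd_le a b (xs n) (hi n)) \<and>
                 limitin (weak_star_topology a b) lo xstar sequentially \<and>
                 limitin (weak_star_topology a b) hi xstar sequentially"
  proof -
    have c1: "fosd_le a b (LO n) (LO (Suc n))" for n by (rule rep_cmp[OF sk(1) LO(2) LO(2) lo_mono])
    have c2: "fosd_le a b (HI (Suc n)) (HI n)" for n by (rule rep_cmp[OF sk(1) HI(2) HI(2) hi_mono])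
    have c3: "fosd_le a b (LO n) (xs n)" for n by (rule rep_cmp[OF sk(1) LO(2) repn lo_le])
    have c4: "fosd_le a b (xs n) (HI n)" for n by (rule rep_cmp[OF sk(1) repn HI(2) hi_ge])
    have c5: "limitin (weak_star_topology a b) LO xstar sequentially"
    proof (rule rep_conv[OF sk(1) LO(2) LO(1) repx xP])
      show "AE \<omega> in \<Omega>. (\<lambda>n. lo n \<omega>) \<longlonglongrightarrow> Zs \<omega>"
        by (rule AE_I2) (unfold lo_def, rule tail_sup(2)[OF Zconv])
    qed
    have c6: "limitin (weak_star_topology a b) HI xstar sequentially"
    proof (rule rep_conv[OF sk(1) HI(2) HI(1) repx xP])
      show "AE \<omega> in \<Omega>. (\<lambda>n. hi n \<omega>) \<longlonglongrightarrow> Zs \<omega>"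
        by (rule AE_I2) (unfold hi_def, rule tail_sup(1)[OF Zconv])
    qed
    show ?thesis
      by (rule exI[of _ LO], rule exI[of _ HI]) (use LO(1) HI(1) c1 c2 c3 c4 c5 c6 in simp)
  qed
qed

definition smeas :: "real \<Rightarrow> real \<Rightarrow> bool \<Rightarrow> nat \<Rightarrow> rat list \<Rightarrow> real measure" where
  "smeas a b up N rs = distr UU (restrict_space borel {a..b}) (stepf a b up N rs)"

lemma smeas_rep:
  assumes "a \<le> b"
  shows "smeas a b up N rs \<in> prob_measures_on a b" "qrep a b UU (smeas a b up N rs) (stepf a b up N rs)"
  unfolding smeas_def
  using meas_rep[OF prob_UU stepf_meas, of a b] clampr_in[OF assms] by (auto simp: stepf_def)

lemma AE_cont:
  fixes Q :: "real \<Rightarrow> real"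
  assumes "mono_on {0<..<1} Q"
    "\<And>\<omega>. \<omega> \<in> {0<..<1} \<Longrightarrow> continuous (at \<omega> within {0<..<1}) Q \<Longrightarrow> P \<omega>"
  shows "AE \<omega> in UU. P \<omega>"
proof (rule AE_I')
  let ?D = "{\<omega>\<in>{0<..<1}. \<not> continuous (at \<omega> within {0<..<1}) Q}"
  have "countable ?D" by (rule mono_on_ctble_discont[OF assms(1)])
  then show "?D \<in> null_sets UU"
    by (subst null_sets_restrict_space) (auto intro: countable_imp_null_set_lborel)
  show "{\<omega> \<in> space UU. \<not> P \<omega>} \<subseteq> ?D" using assms(2) by (auto simp: space_UU)
qed

lemma approx_up:
  assumes muP: "\<mu> \<in> prob_measures_on a b" and ab: "a \<le> b"
    and Q: "qrep a b UU \<mu> Q" "mono_on {0<..<1} Q"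
  obtains rs where "\<And>n. fosd_le a b \<mu> (smeas a b True (Suc n) (rs n))"
    "limitin (weak_star_topology a b) (\<lambda>n. smeas a b True (Suc n) (rs n)) \<mu> sequentially"
proof -
  define ru where "ru N x = (SOME r::rat. x \<le> of_rat r \<and> of_rat r \<le> x + 1 / real N)" for N x
  have ru: "x \<le> of_rat (ru N x) \<and> of_rat (ru N x) \<le> x + 1 / real N" if "0 < N" for N x
  proof -
    have "\<exists>r::rat. x < of_rat r \<and> of_rat r < x + 1 / real N" using that by (intro of_rat_dense) simp
    then have "\<exists>r::rat. x \<le> of_rat r \<and> of_rat r \<le> x + 1 / real N" by (auto intro: less_imp_le)
    then show ?thesis unfolding ru_def by (rule someI_ex)
  qed
  define uval where "uval N k = (if N \<le> k then b else Q (real k / real N))" for N k :: nat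
  define rs where "rs n = map (\<lambda>k. ru (Suc n) (uval (Suc n) k)) [0..<Suc n + 1]" for n
  define h where "h n = stepf a b True (Suc n) (rs n)" for n
  have Qin: "Q \<omega> \<in> {a..b}" if "\<omega> \<in> {0<..<1}" for \<omega> using qrepD(2)[OF Q(1)] that by (simp add: space_UU)
  have hval: "h n \<omega> = clampr a b (of_rat (ru (Suc n) (uval (Suc n) (nat \<lceil>\<omega> * real (Suc n)\<rceil>))))"
    if "\<omega> \<in> {0<..<1}" for n \<omega>
  proof -
    have "nat \<lceil>\<omega> * real (Suc n)\<rceil> \<le> Suc n" by (rule ceil_idx(2)) (use that in auto)
    then have "nat \<lceil>\<omega> * real (Suc n)\<rceil> < Suc n + 1" by linarith
    then have "rs n ! nat \<lceil>\<omega> * real (Suc n)\<rceil> = ru (Suc n) (uval (Suc n) (nat \<lceil>\<omega> * real (Suc n)\<rceil>))"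
      unfolding rs_def by (simp del: upt_Suc)
    then show ?thesis unfolding h_def stepf_def by simp
  qed
  have A: "Q \<omega> \<le> h n \<omega>" if w: "\<omega> \<in> {0<..<1}" for n \<omega>
  proof -
    let ?N = "Suc n" let ?k = "nat \<lceil>\<omega> * real ?N\<rceil>"
    have k1: "1 \<le> ?k" and kle: "\<omega> \<le> real ?k / real ?N" using ceil_idx[of \<omega> ?N] w by auto
    have "Q \<omega> \<le> uval ?N ?k"
    proof (cases "?N \<le> ?k")
      case True then show ?thesis using Qin[OF w] by (simp add: uval_def)
    next
      case False
      then have "real ?k / real ?N < 1" by simp
      moreover have "0 < real ?k / real ?N" using k1 w by (intro divide_pos_pos) auto
      ultimately show ?thesis using False kle w by (auto simp: uval_def intro!: mono_onD[OF Q(2)])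
    qed
    also have "\<dots> \<le> of_rat (ru ?N (uval ?N ?k))" using ru[of ?N] by auto
    finally have "clampr a b (Q \<omega>) \<le> clampr a b (of_rat (ru ?N (uval ?N ?k)))" by (rule clampr_mono)
    then show ?thesis using hval[OF w] clampr_id[OF Qin[OF w]] by simp
  qed
  have B: "(\<lambda>n. h n \<omega>) \<longlonglongrightarrow> Q \<omega>"
    if w: "\<omega> \<in> {0<..<1}" and c: "continuous (at \<omega> within {0<..<1}) Q" for \<omega>
  proof (rule LIMSEQ_I)
    fix r :: real assume r: "0 < r"
    obtain d where d: "d > 0" "\<And>x'. x' \<in> {0<..<1} \<Longrightarrow> dist x' \<omega> < d \<Longrightarrow> dist (Q x') (Q \<omega>) < r/2"
      using c r unfolding continuous_within_eps_delta by (metis half_gt_zero)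
    define \<eta> where "\<eta> = min (min d (1 - \<omega>)) (r/2)"
    have eta: "\<eta> > 0" using d r w unfolding \<eta>_def by auto
    obtain n0 :: nat where n0: "1 / \<eta> < real n0" using reals_Archimedean2 by blast
    show "\<exists>no. \<forall>n\<ge>no. norm (h n \<omega> - Q \<omega>) < r"
    proof (intro exI[of _ n0] allI impI)
      fix n assume "n0 \<le> n"
      let ?N = "Suc n" let ?k = "nat \<lceil>\<omega> * real ?N\<rceil>"
      have "1 / \<eta> < real ?N" using n0 \<open>n0 \<le> n\<close> by linarith
      then have invN: "1 / real ?N < \<eta>" using eta by (simp add: field_simps)
      have k1: "1 \<le> ?k" and kle: "\<omega> \<le> real ?k / real ?N" and kup: "real ?k / real ?N < \<omega> + 1 / real ?N"
        using ceil_idx[of \<omega> ?N] w by auto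
      have "real ?k / real ?N < 1" using kup invN unfolding \<eta>_def by linarith
      then have kN: "\<not> ?N \<le> ?k" by (auto simp: field_simps)
      have "0 < real ?k / real ?N" using k1 w by (intro divide_pos_pos) auto
      then have kin: "real ?k / real ?N \<in> {0<..<1}" using \<open>real ?k / real ?N < 1\<close> by simp
      have "dist (real ?k / real ?N) \<omega> < d" using kle kup invN unfolding \<eta>_def dist_real_def by linarith
      then have dq: "\<bar>Q (real ?k / real ?N) - Q \<omega>\<bar> < r/2" using d(2)[OF kin] by (simp add: dist_real_def)
      have uv: "uval ?N ?k = Q (real ?k / real ?N)" using kN by (simp add: uval_def)
      have "\<bar>of_rat (ru ?N (uval ?N ?k)) - uval ?N ?k\<bar> \<le> 1 / real ?N" using ru[of ?N "uval ?N ?k"] by auto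
      then have "\<bar>of_rat (ru ?N (uval ?N ?k)) - Q \<omega>\<bar> < r" using dq invN unfolding uv \<eta>_def by linarith
      moreover have "\<bar>h n \<omega> - Q \<omega>\<bar> \<le> \<bar>of_rat (ru ?N (uval ?N ?k)) - Q \<omega>\<bar>"
        using hval[OF w, of n] clampr_lip[of a b _ "Q \<omega>"] clampr_id[OF Qin[OF w]] by metis
      ultimately show "norm (h n \<omega> - Q \<omega>) < r" by simp
    qed
  qed
  have hm: "smeas a b True (Suc n) (rs n) \<in> prob_measures_on a b" "qrep a b UU (smeas a b True (Suc n) (rs n)) (h n)" for n
    using smeas_rep[OF ab] unfolding h_def by auto
  show ?thesis
  proof (rule that[of rs])
    show "fosd_le a b \<mu> (smeas a b True (Suc n) (rs n))" for n
      by (rule rep_cmp[OF prob_UU Q(1) hm(2)]) (use A in \<open>auto simp: space_UU\<close>)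
    show "limitin (weak_star_topology a b) (\<lambda>n. smeas a b True (Suc n) (rs n)) \<mu> sequentially"
      by (rule rep_conv[OF prob_UU hm(2) hm(1) Q(1) muP AE_cont[OF Q(2) B]])
  qed
qed

lemma approx_down:
  assumes muP: "\<mu> \<in> prob_measures_on a b" and ab: "a \<le> b"
    and Q: "qrep a b UU \<mu> Q" "mono_on {0<..<1} Q"
  obtains rs where "\<And>n. fosd_le a b (smeas a b False (Suc n) (rs n)) \<mu>"
    "limitin (weak_star_topology a b) (\<lambda>n. smeas a b False (Suc n) (rs n)) \<mu> sequentially"
proof -
  define rl where "rl N x = (SOME r::rat. x - 1 / real N \<le> of_rat r \<and> of_rat r \<le> x)" for N x
  have rl: "x - 1 / real N \<le> of_rat (rl N x) \<and> of_rat (rl N x) \<le> x" if "0 < N" for N x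
  proof -
    have "\<exists>r::rat. x - 1 / real N < of_rat r \<and> of_rat r < x" using that by (intro of_rat_dense) simp
    then have "\<exists>r::rat. x - 1 / real N \<le> of_rat r \<and> of_rat r \<le> x" by (auto intro: less_imp_le)
    then show ?thesis unfolding rl_def by (rule someI_ex)
  qed
  define lval where "lval N k = (if k = 0 then a else Q (real k / real N))" for N k :: nat
  define rs where "rs n = map (\<lambda>k. rl (Suc n) (lval (Suc n) k)) [0..<Suc n + 1]" for n
  define h where "h n = stepf a b False (Suc n) (rs n)" for n
  have Qin: "Q \<omega> \<in> {a..b}" if "\<omega> \<in> {0<..<1}" for \<omega> using qrepD(2)[OF Q(1)] that by (simp add: space_UU)
  have hval: "h n \<omega> = clampr a b (of_rat (rl (Suc n) (lval (Suc n) (nat \<lfloor>\<omega> * real (Suc n)\<rfloor>))))"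
    if "\<omega> \<in> {0<..<1}" for n \<omega>
  proof -
    have "nat \<lfloor>\<omega> * real (Suc n)\<rfloor> < Suc n" by (rule floor_idx(1)) (use that in auto)
    then have "nat \<lfloor>\<omega> * real (Suc n)\<rfloor> < Suc n + 1" by linarith
    then have "rs n ! nat \<lfloor>\<omega> * real (Suc n)\<rfloor> = rl (Suc n) (lval (Suc n) (nat \<lfloor>\<omega> * real (Suc n)\<rfloor>))"
      unfolding rs_def by (simp del: upt_Suc)
    then show ?thesis unfolding h_def stepf_def by simp
  qed
  have A: "h n \<omega> \<le> Q \<omega>" if w: "\<omega> \<in> {0<..<1}" for n \<omega>
  proof -
    let ?N = "Suc n" let ?k = "nat \<lfloor>\<omega> * real ?N\<rfloor>"
    have kle: "real ?k / real ?N \<le> \<omega>" using floor_idx[of \<omega> ?N] w by auto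
    have "of_rat (rl ?N (lval ?N ?k)) \<le> lval ?N ?k" using rl[of ?N] by auto
    also have "lval ?N ?k \<le> Q \<omega>"
    proof (cases "?k = 0")
      case True then show ?thesis using Qin[OF w] by (simp add: lval_def)
    next
      case False
      then have "0 < real ?k / real ?N" by (intro divide_pos_pos) auto
      moreover have "\<omega> < 1" using w by simp
      then have "real ?k / real ?N < 1" using kle by linarith
      ultimately show ?thesis using False kle w by (auto simp: lval_def intro!: mono_onD[OF Q(2)])
    qed
    finally have "clampr a b (of_rat (rl ?N (lval ?N ?k))) \<le> clampr a b (Q \<omega>)" by (rule clampr_mono)
    then show ?thesis using hval[OF w] clampr_id[OF Qin[OF w]] by simp
  qed
  have B: "(\<lambda>n. h n \<omega>) \<longlonglongrightarrow> Q \<omega>"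
    if w: "\<omega> \<in> {0<..<1}" and c: "continuous (at \<omega> within {0<..<1}) Q" for \<omega>
  proof (rule LIMSEQ_I)
    fix r :: real assume r: "0 < r"
    obtain d where d: "d > 0" "\<And>x'. x' \<in> {0<..<1} \<Longrightarrow> dist x' \<omega> < d \<Longrightarrow> dist (Q x') (Q \<omega>) < r/2"
      using c r unfolding continuous_within_eps_delta by (metis half_gt_zero)
    define \<eta> where "\<eta> = min (min d \<omega>) (r/2)"
    have eta: "\<eta> > 0" using d r w unfolding \<eta>_def by auto
    obtain n0 :: nat where n0: "1 / \<eta> < real n0" using reals_Archimedean2 by blast
    show "\<exists>no. \<forall>n\<ge>no. norm (h n \<omega> - Q \<omega>) < r"
    proof (intro exI[of _ n0] allI impI)
      fix n assume "n0 \<le> n"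
      let ?N = "Suc n" let ?k = "nat \<lfloor>\<omega> * real ?N\<rfloor>"
      have "1 / \<eta> < real ?N" using n0 \<open>n0 \<le> n\<close> by linarith
      then have invN: "1 / real ?N < \<eta>" using eta by (simp add: field_simps)
      then have "1 / real ?N < \<omega>" unfolding \<eta>_def by linarith
      then have k1: "1 \<le> ?k" using floor_idx(4)[of \<omega> ?N] w by auto
      have kle: "real ?k / real ?N \<le> \<omega>" and klo: "\<omega> - 1 / real ?N < real ?k / real ?N"
        using floor_idx[of \<omega> ?N] w by auto
      have "0 < ?k" using Suc_le_lessD[OF k1[unfolded One_nat_def]] .
      then have "0 < real ?k" by (simp only: of_nat_0_less_iff)
      then have "0 < real ?k / real ?N" by (intro divide_pos_pos) simp_all
      moreover have "\<omega> < 1" using w by simp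
      moreover have "real ?k / real ?N < 1" using kle \<open>\<omega> < 1\<close> by linarith
      ultimately have kin: "real ?k / real ?N \<in> {0<..<1}" by simp
      have "dist (real ?k / real ?N) \<omega> < d" using kle klo invN unfolding \<eta>_def dist_real_def by linarith
      then have dq: "\<bar>Q (real ?k / real ?N) - Q \<omega>\<bar> < r/2" using d(2)[OF kin] by (simp add: dist_real_def)
      have k0: "?k \<noteq> 0" using \<open>0 < ?k\<close> by (rule gr_implies_not0)
      have uv: "lval ?N ?k = Q (real ?k / real ?N)" unfolding lval_def by (simp only: k0 if_False)
      have "\<bar>of_rat (rl ?N (lval ?N ?k)) - lval ?N ?k\<bar> \<le> 1 / real ?N" using rl[of ?N "lval ?N ?k"] by auto
      then have "\<bar>of_rat (rl ?N (lval ?N ?k)) - Q \<omega>\<bar> < r" using dq invN unfolding uv \<eta>_def by linarith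
      moreover have "\<bar>h n \<omega> - Q \<omega>\<bar> \<le> \<bar>of_rat (rl ?N (lval ?N ?k)) - Q \<omega>\<bar>"
        using hval[OF w, of n] clampr_lip[of a b _ "Q \<omega>"] clampr_id[OF Qin[OF w]] by metis
      ultimately show "norm (h n \<omega> - Q \<omega>) < r" by simp
    qed
  qed
  have hm: "smeas a b False (Suc n) (rs n) \<in> prob_measures_on a b" "qrep a b UU (smeas a b False (Suc n) (rs n)) (h n)" for n
    using smeas_rep[OF ab] unfolding h_def by auto
  show ?thesis
  proof (rule that[of rs])
    show "fosd_le a b (smeas a b False (Suc n) (rs n)) \<mu>" for n
      by (rule rep_cmp[OF prob_UU hm(2) Q(1)]) (use A in \<open>auto simp: space_UU\<close>)
    show "limitin (weak_star_topology a b) (\<lambda>n. smeas a b False (Suc n) (rs n)) \<mu> sequentially"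
      by (rule rep_conv[OF prob_UU hm(2) hm(1) Q(1) muP AE_cont[OF Q(2) B]])
  qed
qed

lemma limitin_ev:
  assumes "limitin X f l F" "openin X U" "l \<in> U"
  shows "eventually (\<lambda>x. f x \<in> U) F"
  using assms unfolding limitin_def by simp

lemma case2_cop:
  assumes ab: "a < b"
  shows "\<exists>Bs. sequence_of_experiments (weak_star_topology a b) Bs \<and>
                countable_order_property (weak_star_topology a b) (fosd_le a b) Bs"
proof -
  have ab': "a \<le> b" using ab by simp
  define B where "B = range (\<lambda>(up, N, rs). smeas a b up N rs)"
  have BP: "B \<subseteq> prob_measures_on a b" unfolding B_def using smeas_rep(1)[OF ab'] by auto
  have key: "(\<exists>y\<in>B. y \<in> V \<and> fosd_le a b y \<mu>) \<and> (\<exists>y\<in>B. y \<in> V \<and> fosd_le a b \<mu> y)"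
    if muP: "\<mu> \<in> prob_measures_on a b" and V: "openin (weak_star_topology a b) V" "\<mu> \<in> V" for \<mu> V
  proof -
    obtain Q where Q: "qrep a b UU \<mu> Q" "mono_on {0<..<1} Q" using quantile_rep[OF muP ab'] by blast
    obtain rs where rs: "\<And>n. fosd_le a b (smeas a b False (Suc n) (rs n)) \<mu>"
      "limitin (weak_star_topology a b) (\<lambda>n. smeas a b False (Suc n) (rs n)) \<mu> sequentially"
      using approx_down[OF muP ab' Q] by blast
    obtain ru where ru: "\<And>n. fosd_le a b \<mu> (smeas a b True (Suc n) (ru n))"
      "limitin (weak_star_topology a b) (\<lambda>n. smeas a b True (Suc n) (ru n)) \<mu> sequentially"
      using approx_up[OF muP ab' Q] by blast
    have "eventually (\<lambda>n. smeas a b False (Suc n) (rs n) \<in> V) sequentially"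
      by (rule limitin_ev[OF rs(2) V])
    then obtain N1 where N1: "\<And>n. n \<ge> N1 \<Longrightarrow> smeas a b False (Suc n) (rs n) \<in> V"
      by (auto simp: eventually_sequentially)
    have n1: "smeas a b False (Suc N1) (rs N1) \<in> V" by (rule N1) simp
    have "eventually (\<lambda>n. smeas a b True (Suc n) (ru n) \<in> V) sequentially"
      by (rule limitin_ev[OF ru(2) V])
    then obtain N2 where N2: "\<And>n. n \<ge> N2 \<Longrightarrow> smeas a b True (Suc n) (ru n) \<in> V"
      by (auto simp: eventually_sequentially)
    have n2: "smeas a b True (Suc N2) (ru N2) \<in> V" by (rule N2) simp
    have m1: "smeas a b False (Suc N1) (rs N1) \<in> B" unfolding B_def
      by (rule image_eqI[of _ _ "(False, Suc N1, rs N1)"]) auto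
    have m2: "smeas a b True (Suc N2) (ru N2) \<in> B" unfolding B_def
      by (rule image_eqI[of _ _ "(True, Suc N2, ru N2)"]) auto
    show ?thesis using m1 m2 n1 n2 rs(1) ru(1) by blast
  qed
  have "countable B" unfolding B_def by simp
  moreover have "B \<noteq> {}" unfolding B_def by simp
  moreover have "B \<subseteq> topspace (weak_star_topology a b)" using BP by (simp add: topspace_ws)
  moreover have "\<exists>y\<in>B. y\<in>V" if "x \<in> topspace (weak_star_topology a b)" "openin (weak_star_topology a b) V" "x \<in> V" for x V
    using key[of x V] that by (auto simp: topspace_ws)
  ultimately obtain Bs where Bs: "sequence_of_experiments (weak_star_topology a b) Bs" "(\<Union>i. Bs i) = B"
    using experiments_from_countable[of B "weak_star_topology a b"] by blast
  moreover have "countable_order_property (weak_star_topology a b) (fosd_le a b) Bs"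
    unfolding countable_order_property_def Bs(2) topspace_ws
  proof (intro ballI allI impI)
    fix x V assume "x \<in> prob_measures_on a b" "openin (weak_star_topology a b) V \<and> x \<in> V"
    then have k: "(\<exists>y\<in>B. y \<in> V \<and> fosd_le a b y x) \<and> (\<exists>y\<in>B. y \<in> V \<and> fosd_le a b x y)"
      using key by blast
    then show "\<exists>x'\<in>B \<inter> V. \<exists>x''\<in>B \<inter> V. fosd_le a b x' x \<and> fosd_le a b x x''" by blast
  qed
  ultimately show ?thesis by blast
qed

theorem proposition3:
  fixes a b :: real
  assumes "a < b"
  shows "(squeezing_property (euclidean :: (real^'n) topology) coord_le \<and>
          (\<exists>Bs. sequence_of_experiments (euclidean :: (real^'n) topology) Bs \<and>
                countable_order_property euclidean coord_le Bs))
       \<and> (squeezing_property (weak_star_topology a b) (fosd_le a b) \<and>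
          (\<exists>Bs. sequence_of_experiments (weak_star_topology a b) Bs \<and>
                countable_order_property (weak_star_topology a b) (fosd_le a b) Bs))"
  using case1_squeeze case1_cop case2_squeeze[OF assms] case2_cop[OF assms] by blast

end
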